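(* Fix $\tau\in\mathbb N$ and assume $p_{A,\hat Y}(a,y)>0$ for all $(a,y)\in\mathcal A\times\mathcal Y$. Let $q^*$ be the partition returned by the greedy procedure on $n$ i.i.d. samples of $(A,\hat Y)$. Then $\hat u^{(q^* )}_{\mathrm{ind}}$ is a consistent estimator of $u^*$: for every $\epsilon>0$, $\Pr\big(|\hat u^{(q^* )}_{\mathrm{ind}}-u^*|>\epsilon\big)\to0$ as $n\to\infty$.
   Context: Let $\hat Y$ take values in a finite set $\mathcal Y$ and $A=(A_1,\dots,A_d)$, $A_k$ taking values in a finite set $\mathcal A_k$, $\mathcal A=\prod_k\mathcal A_k$. Write $p_{\hat Y\mid A}(y\mid a)=\Pr(\hat Y=y\mid A=a)$ and $u^*=\sup_{y\in\mathcal Y}\sup_{(a,a')\in\mathcal A^2}\big|\log\big(p_{\hat Y\mid A}(y\mid a)/p_{\hat Y\mid A}(y\mid a')\big)\big|$. For $t\subseteq[d]=\{1,\dots,d\}$ let $A_t=(A_k)_{k\in t}$ with values in $\mathcal A_t=\prod_{k\in t}\mathcal A_k$. Given i.i.d. samples $(A^{(i)},\hat Y^{(i)})_{i=1}^n$, let $N_{a_t,y}=\#\{i:A^{(i)}_t=a_t,\hat Y^{(i)}=y\}$, $N_{a_t}=\sum_y N_{a_t,y}$, and $\hat p(y\mid a_t)=N_{a_t,y}/N_{a_t}$. A partition $q$ of $[d]$ is feasible if $N_{a_t,y}>\tau$ for all $t\in q$, $a_t\in\mathcal A_t$, $y\in\mathcal Y$. For a feasible partition $q$, $\hat u^{(q)}_{\mathrm{ind}}=\sup_{y\in\mathcal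 Y}\sum_{t\in q}\sup_{(a_t,a_t')\in\mathcal A_t^2}\big|\log\big(\hat p(y\mid a_t)/\hat p(y\mid a_t')\big)\big|$. Greedy procedure: if the partition into singletons is not feasible, $q^*$ is the singleton partition and $\hat u^{(q^* )}_{\mathrm{ind}}$ is set to an arbitrary value; otherwise start with $q$ equal to the singleton partition and, as long as some partition obtained from $q$ by merging two distinct blocks $t_1,t_2\in q$ into $t_1\cup t_2$ is feasible, replace $q$ by such a feasible merged partition minimizing $\hat s^*$ (ties broken arbitrarily); when no feasible merge exists, output $q^*=q$. Here $\hat s^*(q)=(\hat\sigma_q^{2/3}+\hat\sigma_{y,q}^{2/3})^{3/2}$ where $\hat\sigma_q$ and $\hat\sigma_{y,q}$ are the standard deviations, under the empirical joint distribution $\hat p$ of $(A,\hat Y)$, of $\log\big(\hat p_A(A)/\prod_{t\in q}\hat p_{A_t}(A_t)\big)$ and $\log\big(\hat p_{A\mid\hat Y}(A\mid\hat Y)/\prod_{t\in q}\hat p_{A_t\mid\hat Y}(A_t\mid\hat Y)\big)$. *)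

theory Defs
  imports "HOL-Probability.Probability"
begin

text \<open>A sample of size n: indices i < n, each S i = (A^(i), Yhat^(i)); attribute vectors
  are functions nat => 'v, restricted to {..<d}.\<close>
type_synonym ('v,'y) sample = "nat \<Rightarrow> ((nat \<Rightarrow> 'v) \<times> 'y)"

definition cnt_ay :: "nat \<Rightarrow> ('v,'y) sample \<Rightarrow> nat set \<Rightarrow> (nat \<Rightarrow> 'v) \<Rightarrow> 'y \<Rightarrow> nat" where
  "cnt_ay n S t a_t y = card {i. i < n \<and> restrict (fst (S i)) t = a_t \<and> snd (S i) = y}"

definition cnt_a :: "nat \<Rightarrow> ('v,'y) sample \<Rightarrow> nat set \<Rightarrow> (nat \<Rightarrow> 'v) \<Rightarrow> nat" where
  "cnt_a n S t a_t = card {i. i < n \<and> restrict (fst (S i)) t = a_t}"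

definition cnt_y :: "nat \<Rightarrow> ('v,'y) sample \<Rightarrow> 'y \<Rightarrow> nat" where
  "cnt_y n S y = card {i. i < n \<and> snd (S i) = y}"

definition phat_cond :: "nat \<Rightarrow> ('v,'y) sample \<Rightarrow> nat set \<Rightarrow> 'y \<Rightarrow> (nat \<Rightarrow> 'v) \<Rightarrow> real" where
  "phat_cond n S t y a_t = real (cnt_ay n S t a_t y) / real (cnt_a n S t a_t)"

definition feasible :: "nat \<Rightarrow> (nat \<Rightarrow> 'v set) \<Rightarrow> nat \<Rightarrow> ('v,'y) sample \<Rightarrow> nat set set \<Rightarrow> bool" where
  "feasible \<tau> Ak n S q \<longleftrightarrow> (\<forall>t\<in>q. \<forall>a_t\<in>PiE t Ak. \<forall>y. cnt_ay n S t a_t y > \<tau>)"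

definition u_ind :: "(nat \<Rightarrow> 'v set) \<Rightarrow> nat \<Rightarrow> ('v,'y) sample \<Rightarrow> nat set set \<Rightarrow> real" where
  "u_ind Ak n S q = Max (range (\<lambda>y. \<Sum>t\<in>q. Max ((\<lambda>(a, a'). \<bar>ln (phat_cond n S t y a / phat_cond n S t y a')\<bar>)
                                           ` (PiE t Ak \<times> PiE t Ak))))"

definition singletons :: "nat \<Rightarrow> nat set set" where
  "singletons d = (\<lambda>k. {k}) ` {..<d}"

definition merges :: "nat set set \<Rightarrow> nat set set set" where
  "merges q = {insert (t1 \<union> t2) (q - {t1, t2}) | t1 t2. t1 \<in> q \<and> t2 \<in> q \<and> t1 \<noteq> t2}"

definition emp_mean :: "nat \<Rightarrow> ('v,'y) sample \<Rightarrow> ((nat \<Rightarrow> 'v) \<times> 'y \<Rightarrow> real) \<Rightarrow> real" where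
  "emp_mean n S f = (\<Sum>i<n. f (S i)) / real n"

definition emp_sd :: "nat \<Rightarrow> ('v,'y) sample \<Rightarrow> ((nat \<Rightarrow> 'v) \<times> 'y \<Rightarrow> real) \<Rightarrow> real" where
  "emp_sd n S f = sqrt (emp_mean n S (\<lambda>z. (f z - emp_mean n S f)\<^sup>2))"

definition logratio_A :: "nat \<Rightarrow> nat \<Rightarrow> ('v,'y) sample \<Rightarrow> nat set set \<Rightarrow> (nat \<Rightarrow> 'v) \<times> 'y \<Rightarrow> real" where
  "logratio_A d n S q z =
     ln ((real (cnt_a n S {..<d} (restrict (fst z) {..<d})) / real n)
         / (\<Prod>t\<in>q. real (cnt_a n S t (restrict (fst z) t)) / real n))"

definition logratio_AY :: "nat \<Rightarrow> nat \<Rightarrow> ('v,'y) sample \<Rightarrow> nat set set \<Rightarrow> (nat \<Rightarrow> 'v) \<times> 'y \<Rightarrow> real" where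
  "logratio_AY d n S q z =
     ln ((real (cnt_ay n S {..<d} (restrict (fst z) {..<d}) (snd z)) / real (cnt_y n S (snd z)))
         / (\<Prod>t\<in>q. real (cnt_ay n S t (restrict (fst z) t) (snd z)) / real (cnt_y n S (snd z))))"

definition s_hat :: "nat \<Rightarrow> nat \<Rightarrow> ('v,'y) sample \<Rightarrow> nat set set \<Rightarrow> real" where
  "s_hat d n S q = (emp_sd n S (logratio_A d n S q) powr (2/3)
                    + emp_sd n S (logratio_AY d n S q) powr (2/3)) powr (3/2)"

definition greedy_step :: "nat \<Rightarrow> (nat \<Rightarrow> 'v set) \<Rightarrow> nat \<Rightarrow> nat \<Rightarrow> ('v,'y) sample \<Rightarrow> nat set set \<Rightarrow> nat set set \<Rightarrow> bool" where
  "greedy_step \<tau> Ak d n S q q' \<longleftrightarrow>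
     q' \<in> merges q \<and> feasible \<tau> Ak n S q' \<and>
     (\<forall>q''\<in>merges q. feasible \<tau> Ak n S q'' \<longrightarrow> s_hat d n S q' \<le> s_hat d n S q'')"

text \<open>q is a possible output of the greedy procedure (under some tie-breaking)\<close>
definition greedy_output :: "nat \<Rightarrow> (nat \<Rightarrow> 'v set) \<Rightarrow> nat \<Rightarrow> nat \<Rightarrow> ('v,'y) sample \<Rightarrow> nat set set \<Rightarrow> bool" where
  "greedy_output \<tau> Ak d n S q \<longleftrightarrow>
     (if feasible \<tau> Ak n S (singletons d)
      then (greedy_step \<tau> Ak d n S)\<^sup>*\<^sup>* (singletons d) q \<and> \<not> (\<exists>q'\<in>merges q. feasible \<tau> Ak n S q')
      else q = singletons d)"

definition cond_true :: "((nat \<Rightarrow> 'v) \<times> 'y::finite) pmf \<Rightarrow> 'y \<Rightarrow> (nat \<Rightarrow> 'v) \<Rightarrow> real" where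
  "cond_true P y a = pmf P (a, y) / (\<Sum>y'\<in>UNIV. pmf P (a, y'))"

definition ustar :: "(nat \<Rightarrow> 'v set) \<Rightarrow> nat \<Rightarrow> ((nat \<Rightarrow> 'v) \<times> 'y::finite) pmf \<Rightarrow> real" where
  "ustar Ak d P = Max ((\<lambda>(y, a, a'). \<bar>ln (cond_true P y a / cond_true P y a')\<bar>)
                       ` (UNIV \<times> PiE {..<d} Ak \<times> PiE {..<d} Ak))"

end

theory Submission imports Defs begin

lemma greedy_inv:
  assumes "(greedy_step \<tau> Ak d n S)\<^sup>*\<^sup>* (singletons d) q"
  shows "(\<forall>t\<in>q. t \<noteq> {} \<and> t \<subseteq> {..<d}) \<and> \<Union>q = {..<d} \<and> finite q"
  using assms
proof (induction rule: rtranclp_induct)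
  case base
  then show ?case by (auto simp: singletons_def)
next
  case (step q q')
  from step(2) obtain t1 t2 where q': "q' = insert (t1 \<union> t2) (q - {t1, t2})" "t1 \<in> q" "t2 \<in> q"
    unfolding greedy_step_def merges_def by blast
  show ?case using step(3) q' by blast
qed

lemma greedy_final:
  assumes allf: "\<And>q'. (\<forall>t\<in>q'. t \<subseteq> {..<d}) \<Longrightarrow> feasible \<tau> Ak n S q'"
    and g: "greedy_output \<tau> Ak d n S q"
  shows "q = (if d = 0 then {} else {{..<d}})"
proof -
  have fs: "feasible \<tau> Ak n S (singletons d)" by (rule allf) (auto simp: singletons_def)
  with g have r: "(greedy_step \<tau> Ak d n S)\<^sup>*\<^sup>* (singletons d) q"
    and nm: "\<not> (\<exists>q'\<in>merges q. feasible \<tau> Ak n S q')"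
    unfolding greedy_output_def by auto
  note inv = greedy_inv[OF r]
  have eq: "t1 = t2" if "t1 \<in> q" "t2 \<in> q" for t1 t2
  proof (rule ccontr)
    assume "t1 \<noteq> t2"
    then have "insert (t1 \<union> t2) (q - {t1, t2}) \<in> merges q" using that unfolding merges_def by blast
    moreover have "feasible \<tau> Ak n S (insert (t1 \<union> t2) (q - {t1, t2}))"
      by (rule allf) (use inv that in blast)
    ultimately show False using nm by blast
  qed
  show ?thesis
  proof (cases "d = 0")
    case True
    then show ?thesis using inv by auto
  next
    case False
    then have "q \<noteq> {}" using inv by auto
    then obtain t where t: "t \<in> q" by blast
    then have "q = {t}" using eq by blast
    then show ?thesis using inv False by auto
  qed
qed


definition Ccnt :: "nat \<Rightarrow> ('v,'y) sample \<Rightarrow> (nat \<Rightarrow> 'v) \<times> 'y \<Rightarrow> nat" where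
  "Ccnt n S z = card {i. i < n \<and> S i = z}"

lemma map_eq_bernoulli: "map_pmf (\<lambda>w. w = z) P = bernoulli_pmf (pmf P z)"
proof (rule pmf_eqI)
  fix b :: bool
  have le: "pmf P z \<le> 1" by (rule pmf_le_1)
  show "pmf (map_pmf (\<lambda>w. w = z) P) b = pmf (bernoulli_pmf (pmf P z)) b"
  proof (cases b)
    case True
    have "pmf (map_pmf (\<lambda>w. w = z) P) b = measure P {z}"
      using True by (simp add: pmf_map vimage_def)
    then show ?thesis using True le by (simp add: measure_pmf_single)
  next
    case False
    have "pmf (map_pmf (\<lambda>w. w = z) P) b = measure P (UNIV - {z})"
      using False by (simp add: pmf_map vimage_def Compl_eq Diff_eq)
    also have "\<dots> = 1 - pmf P z"
      using measure_pmf.prob_compl[of "{z}" P] by (simp add: measure_pmf_single)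
    finally show ?thesis using False le by simp
  qed
qed

lemma Ccnt_binomial:
  "map_pmf (\<lambda>S. Ccnt n S z) (Pi_pmf {..<n} dflt (\<lambda>_. P)) = binomial_pmf n (pmf P z)"
proof -
  have "binomial_pmf n (pmf P z) = map_pmf (\<lambda>f. card {x\<in>{..<n}. f x})
          (Pi_pmf {..<n} (dflt = z) (\<lambda>_. bernoulli_pmf (pmf P z)))"
    by (rule binomial_pmf_altdef') (auto simp: pmf_le_1)
  also have "Pi_pmf {..<n} (dflt = z) (\<lambda>_. bernoulli_pmf (pmf P z))
      = Pi_pmf {..<n} (dflt = z) (\<lambda>_. map_pmf (\<lambda>w. w = z) P)"
    by (simp add: map_eq_bernoulli)
  also have "\<dots> = map_pmf (\<lambda>h. (\<lambda>w. w = z) \<circ> h) (Pi_pmf {..<n} dflt (\<lambda>_. P))"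
    by (rule Pi_pmf_map) auto
  finally show ?thesis
    by (simp add: pmf.map_comp o_def Ccnt_def)
qed

lemma Ccnt_tail:
  assumes "n > 0" "\<delta> \<ge> 0"
  shows "measure_pmf.prob (Pi_pmf {..<n} dflt (\<lambda>_. P))
           {S. \<bar>real (Ccnt n S z) / n - pmf P z\<bar> \<ge> \<delta>} \<le> 2 * exp (- 2 * real n * \<delta>\<^sup>2)"
proof -
  have "measure_pmf.prob (Pi_pmf {..<n} dflt (\<lambda>_. P))
           {S. \<bar>real (Ccnt n S z) / n - pmf P z\<bar> \<ge> \<delta>}
      = measure_pmf.prob (map_pmf (\<lambda>S. Ccnt n S z) (Pi_pmf {..<n} dflt (\<lambda>_. P)))
           {x. \<bar>real x / n - pmf P z\<bar> \<ge> \<delta>}"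
    by (simp add: vimage_def)
  also have "\<dots> \<le> 2 * exp (- 2 * real n * \<delta>\<^sup>2)"
  proof -
    have bd: "binomial_distribution (pmf P z)" by unfold_locales (auto simp: pmf_le_1)
    show ?thesis unfolding Ccnt_binomial
      using binomial_distribution.prob_abs_ge'[OF bd assms] by simp
  qed
  finally show ?thesis .
qed


lemma max_diff:
  fixes F G :: "'a \<Rightarrow> real"
  assumes "finite A" "A \<noteq> {}" "\<And>x. x \<in> A \<Longrightarrow> \<bar>F x - G x\<bar> \<le> e"
  shows "\<bar>Max (F ` A) - Max (G ` A)\<bar> \<le> e"
proof -
  have "Max (F ` A) \<in> F ` A" by (rule Max_in) (use assms in auto)
  then obtain x where x: "x \<in> A" "Max (F ` A) = F x" by auto
  have "Max (G ` A) \<in> G ` A" by (rule Max_in) (use assms in auto)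
  then obtain y where y: "y \<in> A" "Max (G ` A) = G y" by auto
  have "G x \<le> Max (G ` A)" using x assms by auto
  moreover have "F y \<le> Max (F ` A)" using y assms by auto
  moreover have "\<bar>F x - G x\<bar> \<le> e" "\<bar>F y - G y\<bar> \<le> e" using assms x y by auto
  ultimately show ?thesis using x y by linarith
qed

lemma nested_max:
  fixes H :: "'y::finite \<Rightarrow> 'b \<Rightarrow> real"
  assumes "finite B" "B \<noteq> {}"
  shows "Max ((\<lambda>(y, b). H y b) ` (UNIV \<times> B)) = Max (range (\<lambda>y. Max (H y ` B)))"
proof (rule antisym)
  show "Max ((\<lambda>(y, b). H y b) ` (UNIV \<times> B)) \<le> Max (range (\<lambda>y. Max (H y ` B)))"
  proof (rule Max.boundedI)
    show "finite ((\<lambda>(y, b). H y b) ` (UNIV \<times> B))" using assms by auto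
    show "(\<lambda>(y, b). H y b) ` (UNIV \<times> B) \<noteq> {}" using assms by auto
    fix v assume "v \<in> (\<lambda>(y, b). H y b) ` (UNIV \<times> B)"
    then obtain y b where yb: "b \<in> B" "v = H y b" by auto
    have "v \<le> Max (H y ` B)" using yb assms by auto
    also have "\<dots> \<le> Max (range (\<lambda>y. Max (H y ` B)))" by (rule Max_ge) auto
    finally show "v \<le> Max (range (\<lambda>y. Max (H y ` B)))" .
  qed
next
  show "Max (range (\<lambda>y. Max (H y ` B))) \<le> Max ((\<lambda>(y, b). H y b) ` (UNIV \<times> B))"
  proof (rule Max.boundedI)
    fix v assume "v \<in> range (\<lambda>y. Max (H y ` B))"
    then obtain y where y: "v = Max (H y ` B)" by auto
    show "v \<le> Max ((\<lambda>(y, b). H y b) ` (UNIV \<times> B))"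
      unfolding y
    proof (rule Max.boundedI)
      fix w assume "w \<in> H y ` B"
      then obtain b where "b \<in> B" "w = H y b" by auto
      then show "w \<le> Max ((\<lambda>(y, b). H y b) ` (UNIV \<times> B))"
        using assms by (intro Max_ge) (auto intro!: image_eqI[of _ _ "(y, b)"])
    qed (use assms in auto)
  qed auto
qed

lemma abs_ln_le:
  fixes x :: real
  assumes "0 < x" "exp (-\<eta>) \<le> x" "x \<le> exp \<eta>"
  shows "\<bar>ln x\<bar> \<le> \<eta>"
proof -
  have "ln x \<le> ln (exp \<eta>)" using assms by (subst ln_le_cancel_iff) auto
  moreover have "ln (exp (-\<eta>)) \<le> ln x" using assms by (subst ln_le_cancel_iff) auto
  ultimately show ?thesis by simp
qed

lemma ln_ratio:
  fixes f p :: "'y \<Rightarrow> real"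
  assumes "finite Y" "y0 \<in> Y" "\<And>y. y \<in> Y \<Longrightarrow> f y > 0 \<and> p y > 0 \<and> exp (-\<eta>) \<le> f y / p y \<and> f y / p y \<le> exp \<eta>"
  shows "\<bar>ln ((f y0 / sum f Y) / (p y0 / sum p Y))\<bar> \<le> 2 * \<eta>"
proof -
  have fp: "f y0 > 0" "p y0 > 0" using assms by auto
  have Sf: "sum f Y > 0" using assms by (intro sum_pos2[of Y y0]) (auto intro: less_imp_le)
  have Sp: "sum p Y > 0" using assms by (intro sum_pos2[of Y y0]) (auto intro: less_imp_le)
  have up: "sum f Y \<le> exp \<eta> * sum p Y"
    unfolding sum_distrib_left
  proof (rule sum_mono)
    fix y assume "y \<in> Y" then show "f y \<le> exp \<eta> * p y" using assms(3)[of y] by (auto simp: pos_divide_le_eq mult.commute)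
  qed
  have lo: "exp (-\<eta>) * sum p Y \<le> sum f Y"
    unfolding sum_distrib_left
  proof (rule sum_mono)
    fix y assume "y \<in> Y" then show "exp (-\<eta>) * p y \<le> f y" using assms(3)[of y] by (auto simp: pos_le_divide_eq mult.commute)
  qed
  have r1: "exp (-\<eta>) \<le> sum f Y / sum p Y" "sum f Y / sum p Y \<le> exp \<eta>"
    using up lo Sp by (auto simp: field_simps)
  have r2: "exp (-\<eta>) \<le> f y0 / p y0" "f y0 / p y0 \<le> exp \<eta>" using assms by auto
  have l1: "\<bar>ln (sum f Y / sum p Y)\<bar> \<le> \<eta>"
    using r1 Sf Sp by (intro abs_ln_le) auto
  have l2: "\<bar>ln (f y0 / p y0)\<bar> \<le> \<eta>"
    using r2 fp by (intro abs_ln_le) auto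
  have "(f y0 / sum f Y) / (p y0 / sum p Y) = (f y0 / p y0) / (sum f Y / sum p Y)"
    using Sf Sp fp by (simp add: field_simps)
  then have "ln ((f y0 / sum f Y) / (p y0 / sum p Y)) = ln (f y0 / p y0) - ln (sum f Y / sum p Y)"
    using Sf Sp fp by (simp only:) (rule ln_divide_pos; simp)
  then show ?thesis using l1 l2 by linarith
qed


lemma pair_bound:
  fixes u u' v v' e :: real
  assumes "0<u" "0<u'" "0<v" "0<v'" "\<bar>ln (u/v)\<bar> \<le> e" "\<bar>ln (u'/v')\<bar> \<le> e"
  shows "\<bar>\<bar>ln (u/u')\<bar> - \<bar>ln (v/v')\<bar>\<bar> \<le> 2 * e"
proof -
  have "ln (u/u') = ln u - ln u'" "ln (v/v') = ln v - ln v'" "ln (u/v) = ln u - ln v"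
    "ln (u'/v') = ln u' - ln v'"
    using assms by (simp_all add: ln_divide_pos)
  then show ?thesis using assms(5,6) by linarith
qed

lemma cnt_ay_full:
  assumes "\<forall>i<n. S i \<in> PiE {..<d} Ak \<times> UNIV" "a \<in> PiE {..<d} Ak"
  shows "cnt_ay n S {..<d} a y = Ccnt n S (a, y)"
proof -
  have "{i. i < n \<and> restrict (fst (S i)) {..<d} = a \<and> snd (S i) = y} = {i. i < n \<and> S i = (a, y)}"
  proof (intro Collect_cong iffI)
    fix i assume "i < n \<and> restrict (fst (S i)) {..<d} = a \<and> snd (S i) = y"
    then show "i < n \<and> S i = (a, y)" using assms(1) by (auto simp: prod_eq_iff)
  next
    fix i assume "i < n \<and> S i = (a, y)"
    then show "i < n \<and> restrict (fst (S i)) {..<d} = a \<and> snd (S i) = y" using assms(2) by auto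
  qed
  then show ?thesis unfolding cnt_ay_def Ccnt_def by simp
qed

lemma cnt_a_full:
  fixes S :: "('v,'y::finite) sample"
  assumes "\<forall>i<n. S i \<in> PiE {..<d} Ak \<times> UNIV"
  shows "cnt_a n S {..<d} a = (\<Sum>y\<in>UNIV. Ccnt n S (a, y))"
proof -
  have "{i. i < n \<and> restrict (fst (S i)) {..<d} = a} = (\<Union>y. {i. i < n \<and> S i = (a, y)})"
  proof (intro set_eqI iffI)
    fix i assume "i \<in> {i. i < n \<and> restrict (fst (S i)) {..<d} = a}"
    then show "i \<in> (\<Union>y. {i. i < n \<and> S i = (a, y)})" using assms
      by (auto simp: prod_eq_iff)
  next
    fix i assume "i \<in> (\<Union>y. {i. i < n \<and> S i = (a, y)})"
    then show "i \<in> {i. i < n \<and> restrict (fst (S i)) {..<d} = a}" using assms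
      by (auto simp: PiE_restrict)
  qed
  moreover have "card (\<Union>y. {i. i < n \<and> S i = (a, y)}) = (\<Sum>y\<in>UNIV. card {i. i < n \<and> S i = (a, y)})"
    by (rule card_UN_disjoint) auto
  ultimately show ?thesis unfolding cnt_a_def Ccnt_def by simp
qed

lemma feas:
  fixes S :: "('v,'y) sample"
  assumes ne: "\<forall>k<d. Ak k \<noteq> {}"
    and good: "\<forall>z\<in>PiE {..<d} Ak \<times> UNIV. \<tau> < Ccnt n S z"
    and q: "\<forall>t\<in>q. t \<subseteq> {..<d}"
  shows "feasible \<tau> Ak n S q"
  unfolding feasible_def
proof (intro ballI allI)
  fix t a_t y assume t: "t \<in> q" and at: "a_t \<in> PiE t Ak"
  define a where "a = (\<lambda>k. if k \<in> t then a_t k else if k < d then (SOME v. v \<in> Ak k) else undefined)"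
  have tsub: "t \<subseteq> {..<d}" using q t by auto
  have aX: "a \<in> PiE {..<d} Ak"
    unfolding a_def using at tsub ne by (auto simp: PiE_def Pi_def extensional_def some_in_eq)
  have ra: "restrict a t = a_t" using at unfolding a_def by (auto simp: PiE_def extensional_def restrict_def)
  have "{i. i < n \<and> S i = (a, y)} \<subseteq> {i. i < n \<and> restrict (fst (S i)) t = a_t \<and> snd (S i) = y}"
    using ra by auto
  then have "Ccnt n S (a, y) \<le> cnt_ay n S t a_t y"
    unfolding Ccnt_def cnt_ay_def by (intro card_mono) auto
  moreover have "\<tau> < Ccnt n S (a, y)" using good aX by auto
  ultimately show "\<tau> < cnt_ay n S t a_t y" by simp
qed


lemma det:
  fixes P :: "((nat \<Rightarrow> 'v) \<times> 'y::finite) pmf" and est :: "nat \<Rightarrow> ('v,'y) sample \<Rightarrow> real"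
    and S :: "('v,'y) sample"
  assumes fin: "\<forall>k<d. finite (Ak k)" and setP: "set_pmf P = PiE {..<d} Ak \<times> UNIV"
    and estH: "\<forall>n S. feasible \<tau> Ak n S (singletons d) \<longrightarrow>
               (\<exists>q. greedy_output \<tau> Ak d n S q \<and> est n S = u_ind Ak n S q)"
    and hS: "\<forall>i<n. S i \<in> PiE {..<d} Ak \<times> UNIV" and n: "n > 0" and \<eta>: "\<eta> \<ge> 0"
    and good: "\<forall>z\<in>PiE {..<d} Ak \<times> UNIV. \<tau> < Ccnt n S z \<and>
                 exp (-\<eta>) \<le> (real (Ccnt n S z) / n) / pmf P z \<and> (real (Ccnt n S z) / n) / pmf P z \<le> exp \<eta>"
  shows "\<bar>est n S - ustar Ak d P\<bar> \<le> 4 * \<eta>"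
proof -
  define X where "X = PiE {..<d} Ak"
  have Xne: "X \<noteq> {}" using setP set_pmf_not_empty[of P] unfolding X_def by auto
  have ne: "\<forall>k<d. Ak k \<noteq> {}" using Xne unfolding X_def by (auto simp: PiE_eq_empty_iff)
  have Xfin: "finite X" unfolding X_def using fin by (intro finite_PiE) auto
  have ppos: "pmf P z > 0" if "z \<in> X \<times> UNIV" for z
    using that setP unfolding X_def by (simp add: pmf_positive_iff)
  have allf: "feasible \<tau> Ak n S q'" if "\<forall>t\<in>q'. t \<subseteq> {..<d}" for q'
    by (rule feas) (use ne good that in auto)
  have "feasible \<tau> Ak n S (singletons d)" by (rule allf) (auto simp: singletons_def)
  with estH obtain q where q: "greedy_output \<tau> Ak d n S q" "est n S = u_ind Ak n S q" by blast
  have qeq: "q = (if d = 0 then {} else {{..<d}})"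
    by (rule greedy_final[OF _ q(1)]) (rule allf)
  show ?thesis
  proof (cases "d = 0")
    case True
    have im: "(\<lambda>(y, a, a'). \<bar>ln (cond_true P y a / cond_true P y a')\<bar>)
        ` (UNIV \<times> PiE {..<d} Ak \<times> PiE {..<d} Ak) = {0}"
      using True by (auto simp: image_iff)
    have "ustar Ak d P = 0"
      unfolding ustar_def im by simp
    moreover have "u_ind Ak n S q = 0"
      using qeq True unfolding u_ind_def by (simp add: image_constant_conv)
    ultimately show ?thesis using q(2) \<eta> by simp
  next
    case False
    then have qd: "q = {{..<d}}" using qeq by simp
    define f where "f z = real (Ccnt n S z) / real n" for z
    have fpos: "f z > 0" if "z \<in> X \<times> UNIV" for z
    proof -
      have "\<tau> < Ccnt n S z" using good that unfolding X_def by auto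
      then show ?thesis using n unfolding f_def by simp
    qed
    have ph: "phat_cond n S {..<d} y a = f (a, y) / (\<Sum>y'\<in>UNIV. f (a, y'))" if "a \<in> X" for a y
    proof -
      have "phat_cond n S {..<d} y a = real (Ccnt n S (a, y)) / real (\<Sum>y'\<in>UNIV. Ccnt n S (a, y'))"
        unfolding phat_cond_def using cnt_ay_full[OF hS] cnt_a_full[OF hS] that X_def by simp
      also have "\<dots> = f (a, y) / (\<Sum>y'\<in>UNIV. f (a, y'))"
        unfolding f_def using n by (simp add: sum_divide_distrib[symmetric])
      finally show ?thesis .
    qed
    have phpos: "phat_cond n S {..<d} y a > 0" if "a \<in> X" for a y
      using ph[OF that] fpos that by (auto intro!: divide_pos_pos sum_pos)
    have ctpos: "cond_true P y a > 0" if "a \<in> X" for a y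
      using ppos that unfolding cond_true_def by (auto intro!: divide_pos_pos sum_pos)
    have lnb: "\<bar>ln (phat_cond n S {..<d} y a / cond_true P y a)\<bar> \<le> 2 * \<eta>" if "a \<in> X" for a y
      unfolding ph[OF that] cond_true_def
    proof (rule ln_ratio[where f = "\<lambda>y. f (a, y)" and p = "\<lambda>y. pmf P (a, y)"])
      fix y' :: 'y
      have "(a, y') \<in> X \<times> UNIV" using that by auto
      then show "f (a, y') > 0 \<and> pmf P (a, y') > 0 \<and> exp (-\<eta>) \<le> f (a, y') / pmf P (a, y')
          \<and> f (a, y') / pmf P (a, y') \<le> exp \<eta>"
        using fpos ppos good unfolding f_def X_def by auto
    qed auto
    define Hp where "Hp y = (\<lambda>(a, a'). \<bar>ln (phat_cond n S {..<d} y a / phat_cond n S {..<d} y a')\<bar>)" for y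
    define Hc where "Hc y = (\<lambda>(a, a'). \<bar>ln (cond_true P y a / cond_true P y a')\<bar>)" for y
    have u1: "u_ind Ak n S q = Max (range (\<lambda>y. Max (Hp y ` (X \<times> X))))"
      unfolding qd u_ind_def Hp_def X_def by simp
    have u2: "ustar Ak d P = Max ((\<lambda>(y, b). Hc y b) ` (UNIV \<times> (X \<times> X)))"
      unfolding ustar_def Hc_def X_def by (rule arg_cong[where f = Max]) (auto simp: image_iff)
    also have "\<dots> = Max (range (\<lambda>y. Max (Hc y ` (X \<times> X))))"
      by (rule nested_max) (use Xfin Xne in auto)
    finally have u2: "ustar Ak d P = Max (range (\<lambda>y. Max (Hc y ` (X \<times> X))))" .
    have "\<bar>Max (range (\<lambda>y. Max (Hp y ` (X \<times> X)))) - Max (range (\<lambda>y. Max (Hc y ` (X \<times> X))))\<bar> \<le> 4 * \<eta>"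
    proof (rule max_diff)
      fix y :: 'y
      show "\<bar>Max (Hp y ` (X \<times> X)) - Max (Hc y ` (X \<times> X))\<bar> \<le> 4 * \<eta>"
      proof (rule max_diff)
        fix b assume b: "b \<in> X \<times> X"
        obtain a a' where ab: "b = (a, a')" "a \<in> X" "a' \<in> X" using b by auto
        have "\<bar>Hp y b - Hc y b\<bar> \<le> 2 * (2 * \<eta>)"
          unfolding ab Hp_def Hc_def
          by (simp only: case_prod_conv, rule pair_bound)
             (use phpos ctpos lnb ab in auto)
        then show "\<bar>Hp y b - Hc y b\<bar> \<le> 4 * \<eta>" by simp
      qed (use Xfin Xne in auto)
    qed auto
    then show ?thesis using q(2) u1 u2 by simp
  qed
qed


lemma exp_seq_zero:
  assumes "c > 0"
  shows "(\<lambda>n::nat. 2 * exp (- 2 * real n * c)) \<longlonglongrightarrow> 0"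
proof -
  have "(\<lambda>n::nat. 2 * exp (-2 * c) ^ n) \<longlonglongrightarrow> 2 * 0"
    by (intro tendsto_mult tendsto_const LIMSEQ_power_zero) (use assms in simp)
  moreover have "exp (- 2 * real n * c) = exp (-2 * c) ^ n" for n
    by (subst exp_of_nat_mult[symmetric]) (simp add: algebra_simps)
  ultimately show ?thesis by simp
qed

theorem theorem3:
  fixes d \<tau> :: nat and Ak :: "nat \<Rightarrow> 'v set" and P :: "((nat \<Rightarrow> 'v) \<times> 'y::finite) pmf"
    and est :: "nat \<Rightarrow> ('v,'y) sample \<Rightarrow> real" and \<epsilon> :: real
  assumes "\<forall>k<d. finite (Ak k)"
    and "set_pmf P = PiE {..<d} Ak \<times> UNIV"
    and "\<forall>n S. feasible \<tau> Ak n S (singletons d) \<longrightarrow>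
               (\<exists>q. greedy_output \<tau> Ak d n S q \<and> est n S = u_ind Ak n S q)"
    and "\<epsilon> > 0"
  shows "(\<lambda>n. measure_pmf.prob (Pi_pmf {..<n} undefined (\<lambda>_. P))
                 {S. \<bar>est n S - ustar Ak d P\<bar> > \<epsilon>}) \<longlonglongrightarrow> 0"
proof -
  note fin = assms(1) and setP = assms(2) and estH = assms(3) and \<epsilon> = assms(4)
  define Z where "Z = PiE {..<d} Ak \<times> (UNIV :: 'y set)"
  have Zfin: "finite Z" unfolding Z_def using fin by (intro finite_cartesian_product finite_PiE) auto
  have ppos: "pmf P z > 0" if "z \<in> Z" for z
    using that setP unfolding Z_def by (simp add: pmf_positive_iff)
  define \<eta> where "\<eta> = \<epsilon> / 8"
  have \<eta>: "\<eta> > 0" using \<epsilon> unfolding \<eta>_def by simp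
  define \<kappa> where "\<kappa> = min (1/2) (min (1 - exp (-\<eta>)) (exp \<eta> - 1))"
  have \<kappa>pos: "\<kappa> > 0" unfolding \<kappa>_def using \<eta> by simp
  define \<delta> where "\<delta> z = pmf P z * \<kappa>" for z
  have \<delta>pos: "\<delta> z > 0" if "z \<in> Z" for z unfolding \<delta>_def using ppos[OF that] \<kappa>pos by simp
  define M where "M n = Pi_pmf {..<n} undefined (\<lambda>_. P)" for n :: nat
  have ev1: "\<forall>\<^sub>F n in sequentially. real \<tau> < real n * pmf P z / 2" if "z \<in> Z" for z
  proof -
    obtain N :: nat where N: "real N > 2 * real \<tau> / pmf P z" using reals_Archimedean2 by blast
    show ?thesis unfolding eventually_sequentially
    proof (intro exI allI impI)
      fix n assume "N \<le> n"
      then have "real n > 2 * real \<tau> / pmf P z" using N by linarith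
      then show "real \<tau> < real n * pmf P z / 2" using ppos[OF that] by (simp add: field_simps)
    qed
  qed
  have ev: "\<forall>\<^sub>F n in sequentially. 0 < n \<and> (\<forall>z\<in>Z. real \<tau> < real n * pmf P z / 2)"
  proof (rule eventually_conj)
    show "\<forall>\<^sub>F n in sequentially. 0 < n" by (rule eventually_gt_at_top)
    show "\<forall>\<^sub>F n in sequentially. \<forall>z\<in>Z. real \<tau> < real n * pmf P z / 2"
      by (rule eventually_ball_finite[OF Zfin]) (use ev1 in blast)
  qed
  have bound: "measure_pmf.prob (M n) {S. \<bar>est n S - ustar Ak d P\<bar> > \<epsilon>}
      \<le> (\<Sum>z\<in>Z. 2 * exp (- 2 * real n * (\<delta> z)\<^sup>2))"
    if n: "0 < n" and nz: "\<forall>z\<in>Z. real \<tau> < real n * pmf P z / 2" for n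
  proof -
    have sub: "{S. \<bar>est n S - ustar Ak d P\<bar> > \<epsilon>} \<inter> set_pmf (M n)
        \<subseteq> (\<Union>z\<in>Z. {S. \<bar>real (Ccnt n S z) / n - pmf P z\<bar> \<ge> \<delta> z})"
    proof
      fix S assume S: "S \<in> {S. \<bar>est n S - ustar Ak d P\<bar> > \<epsilon>} \<inter> set_pmf (M n)"
      show "S \<in> (\<Union>z\<in>Z. {S. \<bar>real (Ccnt n S z) / n - pmf P z\<bar> \<ge> \<delta> z})"
      proof (rule ccontr)
        assume "S \<notin> (\<Union>z\<in>Z. {S. \<bar>real (Ccnt n S z) / n - pmf P z\<bar> \<ge> \<delta> z})"
        then have close: "\<bar>real (Ccnt n S z) / n - pmf P z\<bar> < \<delta> z" if "z \<in> Z" for z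
          using that by force
        have hS: "\<forall>i<n. S i \<in> PiE {..<d} Ak \<times> UNIV"
          using S setP unfolding M_def by (auto simp: set_Pi_pmf PiE_dflt_def)
        have good: "\<forall>z\<in>PiE {..<d} Ak \<times> UNIV. \<tau> < Ccnt n S z \<and>
                 exp (-\<eta>) \<le> (real (Ccnt n S z) / n) / pmf P z \<and> (real (Ccnt n S z) / n) / pmf P z \<le> exp \<eta>"
        proof
          fix z assume zZ': "z \<in> PiE {..<d} Ak \<times> (UNIV :: 'y set)"
          then have zZ: "z \<in> Z" unfolding Z_def .
          define r where "r = real (Ccnt n S z) / n"
          have p: "pmf P z > 0" using ppos[OF zZ] .
          have c: "\<bar>r - pmf P z\<bar> < pmf P z * \<kappa>" using close[OF zZ] unfolding r_def \<delta>_def .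
          have k1: "\<kappa> \<le> 1/2" "\<kappa> \<le> 1 - exp (-\<eta>)" "\<kappa> \<le> exp \<eta> - 1" unfolding \<kappa>_def by (auto simp: min_def)
          have "r > pmf P z / 2"
          proof -
            have "pmf P z * \<kappa> \<le> pmf P z * (1/2)" using k1 p by (intro mult_left_mono) auto
            then show ?thesis using c by linarith
          qed
          then have "real n * (pmf P z / 2) < real n * r" using n by (intro mult_strict_left_mono) auto
          then have "real \<tau> < r * n" using nz zZ by (auto simp: field_simps)
          then have t: "\<tau> < Ccnt n S z" using n unfolding r_def by simp
          have lo: "pmf P z * exp (-\<eta>) \<le> r"
          proof -
            have "pmf P z * \<kappa> \<le> pmf P z * (1 - exp (-\<eta>))" using k1 p by (intro mult_left_mono) auto
            then show ?thesis using c by (simp add: algebra_simps)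
          qed
          have hi: "r \<le> pmf P z * exp \<eta>"
          proof -
            have "pmf P z * \<kappa> \<le> pmf P z * (exp \<eta> - 1)" using k1 p by (intro mult_left_mono) auto
            then show ?thesis using c by (simp add: algebra_simps)
          qed
          have "exp (-\<eta>) \<le> r / pmf P z" "r / pmf P z \<le> exp \<eta>"
            using lo hi p by (simp_all add: pos_le_divide_eq pos_divide_le_eq mult.commute)
          then show "\<tau> < Ccnt n S z \<and> exp (-\<eta>) \<le> (real (Ccnt n S z) / n) / pmf P z
              \<and> (real (Ccnt n S z) / n) / pmf P z \<le> exp \<eta>"
            using t unfolding r_def by simp
        qed
        have "\<bar>est n S - ustar Ak d P\<bar> \<le> 4 * \<eta>"
          by (rule det[OF fin setP estH hS n _ good]) (use \<eta> in simp)
        then show False using S \<epsilon> unfolding \<eta>_def by simp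
      qed
    qed
    have "measure_pmf.prob (M n) {S. \<bar>est n S - ustar Ak d P\<bar> > \<epsilon>}
        = measure_pmf.prob (M n) ({S. \<bar>est n S - ustar Ak d P\<bar> > \<epsilon>} \<inter> set_pmf (M n))"
      by (simp add: measure_Int_set_pmf)
    also have "\<dots> \<le> measure_pmf.prob (M n) (\<Union>z\<in>Z. {S. \<bar>real (Ccnt n S z) / n - pmf P z\<bar> \<ge> \<delta> z})"
      by (rule measure_pmf.finite_measure_mono[OF sub]) simp
    also have "\<dots> \<le> (\<Sum>z\<in>Z. measure_pmf.prob (M n) {S. \<bar>real (Ccnt n S z) / n - pmf P z\<bar> \<ge> \<delta> z})"
      by (rule measure_pmf.finite_measure_subadditive_finite) (use Zfin in auto)
    also have "\<dots> \<le> (\<Sum>z\<in>Z. 2 * exp (- 2 * real n * (\<delta> z)\<^sup>2))"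
    proof (rule sum_mono)
      fix z assume "z \<in> Z"
      then show "measure_pmf.prob (M n) {S. \<bar>real (Ccnt n S z) / n - pmf P z\<bar> \<ge> \<delta> z}
          \<le> 2 * exp (- 2 * real n * (\<delta> z)\<^sup>2)"
        unfolding M_def using Ccnt_tail[OF n, of "\<delta> z" undefined P z] less_imp_le[OF \<delta>pos] by blast
    qed
    finally show ?thesis .
  qed
  have lim: "(\<lambda>n. \<Sum>z\<in>Z. 2 * exp (- 2 * real n * (\<delta> z)\<^sup>2)) \<longlonglongrightarrow> 0"
  proof (rule tendsto_null_sum)
    fix z assume "z \<in> Z"
    then show "(\<lambda>n. 2 * exp (- 2 * real n * (\<delta> z)\<^sup>2)) \<longlonglongrightarrow> 0"
      using \<delta>pos[OF \<open>z \<in> Z\<close>] by (intro exp_seq_zero) simp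
  qed
  show ?thesis
  proof (rule Lim_null_comparison[OF _ lim])
    show "\<forall>\<^sub>F n in sequentially. norm (measure_pmf.prob (Pi_pmf {..<n} undefined (\<lambda>_. P))
                 {S. \<bar>est n S - ustar Ak d P\<bar> > \<epsilon>}) \<le> (\<Sum>z\<in>Z. 2 * exp (- 2 * real n * (\<delta> z)\<^sup>2))"
      using ev by eventually_elim (use bound in \<open>auto simp: M_def\<close>)
  qed
qed

end
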